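(* Under the standing assumptions (A1)–(A2) below, there exists $\varepsilon^*>0$ such that if $0<\varepsilon<\varepsilon^*$ and $(\bm{\alpha}_m)_{m\ge1}\subset\mathcal{A}^{(t_0,t_f)}$ is a sequence with $I_\varepsilon^{(t_0,t_f)}[\bm{\alpha}_m]<M_1$ for all $m$ and some $M_1>0$, then there exists $M_2>0$ such that $\|\bm{\alpha}_m\|_{H^1}<M_2$ for all $m$.
   Context: Write points of $\mathbb{R}^n$ as $\mathbf{x}=(x,\mathbf{y})$ with $x\in\mathbb{R}$, $\mathbf{y}\in\mathbb{R}^{n-1}$; $|\cdot|$ is the Euclidean norm and $\langle\cdot,\cdot\rangle$ the Euclidean inner product. Let $\mathbf{F}^{\pm}:\mathbb{R}^n\to\mathbb{R}^n$ be smooth vector fields and define the piecewise-smooth field $\mathbf{F}(\mathbf{x})=\mathbf{F}^+(\mathbf{x})$ if $x>0$, $\mathbf{F}(\mathbf{x})=\mathbf{F}^-(\mathbf{x})$ if $x<0$. Standing assumptions: (A1) (growth) There exist $1<p<\infty$, $R_1,c_1,c_3,c_5>0$ and $c_2,c_4,c_6\in\mathbb{R}$ with $c_5<c_1$ such that for $|\mathbf{x}|>R_1$: $|\mathbf{F}^-(\mathbf{x})|\ge c_1|\mathbf{x}|^p+c_2$ if $x<0$ and $|\mathbf{F}^+(\mathbf{x})|\ge c_1|\mathbf{x}|^p+c_2$ if $x>0$; $|\partial_x\mathbf{F}^-(\mathbf{x})|\le c_3|\mathbf{x}|^p+c_4$ if $x<0$ and $|\partial_x\mathbf{F}^+(\mathbf{x})|\le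 c_3|\mathbf{x}|^p+c_4$ if $x>0$; and $|\mathbf{F}^+(0,\mathbf{y})-\mathbf{F}^-(0,\mathbf{y})|\le c_5|\mathbf{y}|^p+c_6$. (A2) (asymptotically inward-flowing) There exist $R_2,c_7>0$ such that $|\mathbf{x}|>R_2$ implies $\mathbf{F}^{\pm}(\mathbf{x})\neq0$ and $\langle\mathbf{F}^-(\mathbf{x}),\mathbf{x}/|\mathbf{x}|\rangle<-c_7|\mathbf{F}^-(\mathbf{x})|$ if $x\le0$, $\langle\mathbf{F}^+(\mathbf{x}),\mathbf{x}/|\mathbf{x}|\rangle<-c_7|\mathbf{F}^+(\mathbf{x})|$ if $x\ge0$. Mollification: let $\zeta:\mathbb{R}\to\mathbb{R}$ be a smooth, even, nonnegative function supported in $[-1,1]$ with $\int_{\mathbb{R}}\zeta=1$. For $\varepsilon>0$ set $\zeta_\varepsilon(x)=\zeta(x/\varepsilon)/\varepsilon$, and define \[ \mathbf{F}^{\varepsilon}(x,\mathbf{y})=\int_{-\varepsilon}^{\varepsilon}\zeta_\varepsilon(u)\Big(\mathbf{F}^-(x-u,\mathbf{y})\mathbb{1}_{\{u\ge x\}}+\mathbf{F}^+(x-u,\mathbf{y})\mathbb{1}_{\{u\le x\}}\Big)\,du . \] Fix $-\infty<t_0<t_f<\infty$ and $\mathbf{x}_0,\mathbf{x}_f\in\mathbb{R}^n$. The admissible set is $\mathcal{A}^{(t_0,t_f)}=\{\bm{\alpha}\in H^1([t_0,t_f];\mathbb{R}^n):\bm{\alpha}(t_0)=\mathbf{x}_0,\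 \bm{\alpha}(t_f)=\mathbf{x}_f\}$, and the mollified Freidlin–Wentzell rate functional is $I_\varepsilon^{(t_0,t_f)}[\bm{\alpha}]=\int_{t_0}^{t_f}|\dot{\bm{\alpha}}(t)-\mathbf{F}^{\varepsilon}(\bm{\alpha}(t))|^2\,dt$. Here $\|\bm{\alpha}\|_{H^1}^2=\int_{t_0}^{t_f}(|\bm{\alpha}|^2+|\dot{\bm{\alpha}}|^2)\,dt$. *)

theory Defs
  imports "HOL-Analysis.Analysis"
begin

fun Ck :: "nat \<Rightarrow> ('a::real_normed_vector \<Rightarrow> 'b::real_normed_vector) \<Rightarrow> bool" where
  "Ck 0 f = continuous_on UNIV f"
| "Ck (Suc k) f = ((\<forall>x. f differentiable (at x)) \<and>
                   (\<forall>v. Ck k (\<lambda>x. frechet_derivative f (at x) v)))"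

definition smooth :: "('a::real_normed_vector \<Rightarrow> 'b::real_normed_vector) \<Rightarrow> bool" where
  "smooth f \<longleftrightarrow> (\<forall>k. Ck k f)"

(* Points of R^n are v, with x-coordinate v \<bullet> e (e a fixed standard basis vector)
   and y-part v - (v \<bullet> e) *\<^sub>R e.  Shifting x by -u is v - u *\<^sub>R e. *)

definition assumption_A1 ::
  "'a::euclidean_space \<Rightarrow> ('a \<Rightarrow> 'a) \<Rightarrow> ('a \<Rightarrow> 'a) \<Rightarrow> bool" where
  "assumption_A1 e Fm Fp \<longleftrightarrow>
    (\<exists>p R1 c1 c2 c3 c4 c5 c6. 1 < p \<and> R1 > 0 \<and> c1 > 0 \<and> c3 > 0 \<and> c5 > 0 \<and> c5 < c1 \<and>
      (\<forall>v. norm v > R1 \<longrightarrow>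
         (v \<bullet> e < 0 \<longrightarrow> norm (Fm v) \<ge> c1 * norm v powr p + c2) \<and>
         (v \<bullet> e > 0 \<longrightarrow> norm (Fp v) \<ge> c1 * norm v powr p + c2) \<and>
         (v \<bullet> e < 0 \<longrightarrow> norm (frechet_derivative Fm (at v) e) \<le> c3 * norm v powr p + c4) \<and>
         (v \<bullet> e > 0 \<longrightarrow> norm (frechet_derivative Fp (at v) e) \<le> c3 * norm v powr p + c4) \<and>
         (v \<bullet> e = 0 \<longrightarrow> norm (Fp v - Fm v) \<le> c5 * norm (v - (v \<bullet> e) *\<^sub>R e) powr p + c6)))"

definition assumption_A2 ::
  "'a::euclidean_space \<Rightarrow> ('a \<Rightarrow> 'a) \<Rightarrow> ('a \<Rightarrow> 'a) \<Rightarrow> bool" where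
  "assumption_A2 e Fm Fp \<longleftrightarrow>
    (\<exists>R2 c7. R2 > 0 \<and> c7 > 0 \<and>
      (\<forall>v. norm v > R2 \<longrightarrow>
         Fm v \<noteq> 0 \<and> Fp v \<noteq> 0 \<and>
         (v \<bullet> e \<le> 0 \<longrightarrow> Fm v \<bullet> (v /\<^sub>R norm v) < - c7 * norm (Fm v)) \<and>
         (v \<bullet> e \<ge> 0 \<longrightarrow> Fp v \<bullet> (v /\<^sub>R norm v) < - c7 * norm (Fp v))))"

definition mollifier :: "(real \<Rightarrow> real) \<Rightarrow> bool" where
  "mollifier \<zeta> \<longleftrightarrow> smooth \<zeta> \<and> (\<forall>x. \<zeta> (- x) = \<zeta> x) \<and> (\<forall>x. \<zeta> x \<ge> 0) \<and>
     (\<forall>x. \<zeta> x \<noteq> 0 \<longrightarrow> x \<in> {-1..1}) \<and> (\<zeta> has_integral 1) UNIV"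

definition Feps ::
  "(real \<Rightarrow> real) \<Rightarrow> 'a::euclidean_space \<Rightarrow> ('a \<Rightarrow> 'a) \<Rightarrow> ('a \<Rightarrow> 'a) \<Rightarrow> real \<Rightarrow> 'a \<Rightarrow> 'a" where
  "Feps \<zeta> e Fm Fp \<epsilon> v =
     integral {-\<epsilon>..\<epsilon>} (\<lambda>u. (\<zeta> (u / \<epsilon>) / \<epsilon>) *\<^sub>R
        ((if u \<ge> v \<bullet> e then Fm (v - u *\<^sub>R e) else 0) +
         (if u \<le> v \<bullet> e then Fp (v - u *\<^sub>R e) else 0)))"

(* alpha is in the admissible set A^(t0,tf), with weak derivative alpha' in L^2 *)
definition admissible ::
  "real \<Rightarrow> real \<Rightarrow> 'a::euclidean_space \<Rightarrow> 'a \<Rightarrow> (real \<Rightarrow> 'a) \<Rightarrow> (real \<Rightarrow> 'a) \<Rightarrow> bool" where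
  "admissible t0 tf x0 xf \<alpha> \<alpha>' \<longleftrightarrow>
     set_borel_measurable lborel {t0..tf} \<alpha>' \<and>
     (\<integral>\<^sup>+ t\<in>{t0..tf}. ennreal ((norm (\<alpha>' t))\<^sup>2) \<partial>lborel) < \<infinity> \<and>
     (\<forall>t\<in>{t0..tf}. \<alpha> t = x0 + (LINT s:{t0..t}|lborel. \<alpha>' s)) \<and>
     \<alpha> tf = xf"

definition rate ::
  "(real \<Rightarrow> real) \<Rightarrow> 'a::euclidean_space \<Rightarrow> ('a \<Rightarrow> 'a) \<Rightarrow> ('a \<Rightarrow> 'a) \<Rightarrow> real \<Rightarrow>
   real \<Rightarrow> real \<Rightarrow> (real \<Rightarrow> 'a) \<Rightarrow> (real \<Rightarrow> 'a) \<Rightarrow> ennreal" where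
  "rate \<zeta> e Fm Fp \<epsilon> t0 tf \<alpha> \<alpha>' =
     (\<integral>\<^sup>+ t\<in>{t0..tf}. ennreal ((norm (\<alpha>' t - Feps \<zeta> e Fm Fp \<epsilon> (\<alpha> t)))\<^sup>2) \<partial>lborel)"

definition H1_norm_sq :: "real \<Rightarrow> real \<Rightarrow> (real \<Rightarrow> 'a::euclidean_space) \<Rightarrow> (real \<Rightarrow> 'a) \<Rightarrow> ennreal" where
  "H1_norm_sq t0 tf \<alpha> \<alpha>' =
     (\<integral>\<^sup>+ t\<in>{t0..tf}. ennreal ((norm (\<alpha> t))\<^sup>2 + (norm (\<alpha>' t))\<^sup>2) \<partial>lborel)"

end

theory Submission
  imports Defs
begin


lemma geo:
  fixes H z v w :: "'a::real_inner"
  assumes hz: "H \<bullet> z \<le> - c * norm z * norm H" and w1: "norm w = 1"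
    and cone: "norm (norm v *\<^sub>R w - v) \<le> c/2 * norm v"
    and vz: "norm (v - z) \<le> \<epsilon>" and c: "c > 0" and eps: "\<epsilon> \<ge> 0"
    and big: "norm v \<ge> 4*\<epsilon>/c + 2*\<epsilon>" and zpos: "norm z > 0"
  shows "H \<bullet> w \<le> 0"
proof -
  have 1: "norm z * (H \<bullet> w) = H \<bullet> (norm z *\<^sub>R w - z) + H \<bullet> z"
    by (simp add: inner_diff_right)
  have 2: "H \<bullet> (norm z *\<^sub>R w - z) \<le> norm H * norm (norm z *\<^sub>R w - z)"
    using norm_cauchy_schwarz by blast
  have eq: "norm z *\<^sub>R w - z = (norm z - norm v) *\<^sub>R w + (norm v *\<^sub>R w - v) + (v - z)"
    by (simp add: algebra_simps)
  have t1: "norm (norm z *\<^sub>R w - z) \<le> norm ((norm z - norm v) *\<^sub>R w) + norm (norm v *\<^sub>R w - v) + norm (v - z)"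
    unfolding eq by (meson norm_triangle_ineq order_trans add_right_mono)
  have t2: "norm ((norm z - norm v) *\<^sub>R w) = \<bar>norm z - norm v\<bar>" using w1 by simp
  have t3: "\<bar>norm z - norm v\<bar> \<le> \<epsilon>"
    using vz norm_triangle_ineq3[of v z] norm_triangle_ineq3[of z v] norm_minus_commute[of v z] by linarith
  have 3: "norm (norm z *\<^sub>R w - z) \<le> 2*\<epsilon> + c/2 * norm v" using t1 t2 t3 cone vz by linarith
  have 4: "norm z \<ge> norm v - \<epsilon>"
    using vz norm_triangle_ineq3[of v z] by linarith
  have 5: "c * norm v \<ge> 4*\<epsilon> + 2*c*\<epsilon>"
  proof -
    have "c * norm v \<ge> c * (4*\<epsilon>/c + 2*\<epsilon>)" using big c by (simp add: mult_left_mono)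
    also have "c * (4*\<epsilon>/c + 2*\<epsilon>) = 4*\<epsilon> + 2*c*\<epsilon>" using c by (simp add: field_simps)
    finally show ?thesis .
  qed
  have "norm z * (H \<bullet> w) \<le> norm H * (2*\<epsilon> + c/2 * norm v) - c * norm z * norm H"
    using 1 2 3 hz mult_left_mono[OF 3, of "norm H"] by simp
  also have "\<dots> \<le> norm H * (2*\<epsilon> + c/2 * norm v) - c * (norm v - \<epsilon>) * norm H"
    using 4 c by (simp add: mult_right_mono)
  also have "\<dots> = norm H * (2*\<epsilon> + c*\<epsilon> - c/2 * norm v)" by (simp add: algebra_simps)
  also have "\<dots> \<le> 0" using 5 by (intro mult_nonneg_nonpos) auto
  finally have "norm z * (H \<bullet> w) \<le> 0" .
  then show ?thesis using zpos by (simp add: mult_le_0_iff)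
qed



lemma Feps_bounded:
  fixes Fm Fp :: "'a::euclidean_space \<Rightarrow> 'a" and e :: 'a
  assumes e: "e \<in> Basis" and cm: "continuous_on UNIV Fm" and cp: "continuous_on UNIV Fp"
    and cz: "continuous_on UNIV \<zeta>" and z0: "\<forall>x. \<zeta> x \<ge> 0" and eps: "\<epsilon> > 0"
  shows "\<exists>K. \<forall>v. norm v \<le> B \<longrightarrow> norm (Feps \<zeta> e Fm Fp \<epsilon> v) \<le> K"
proof -
  have ne: "norm e = 1" using e by simp
  have "bounded (Fm ` cball 0 (B+\<epsilon>))"
    by (intro compact_imp_bounded compact_continuous_image continuous_on_subset[OF cm]) auto
  then obtain C1 where C1: "\<And>z. z \<in> cball 0 (B+\<epsilon>) \<Longrightarrow> norm (Fm z) \<le> C1"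
    unfolding bounded_iff by blast
  have "bounded (Fp ` cball 0 (B+\<epsilon>))"
    by (intro compact_imp_bounded compact_continuous_image continuous_on_subset[OF cp]) auto
  then obtain C2 where C2: "\<And>z. z \<in> cball 0 (B+\<epsilon>) \<Longrightarrow> norm (Fp z) \<le> C2"
    unfolding bounded_iff by blast
  have "bounded (\<zeta> ` {-1..1})"
    by (intro compact_imp_bounded compact_continuous_image continuous_on_subset[OF cz]) auto
  then obtain Z where Z: "\<And>x. x \<in> {-1..1} \<Longrightarrow> norm (\<zeta> x) \<le> Z"
    unfolding bounded_iff by blast
  define K0 where "K0 = max 0 Z / \<epsilon> * (max 0 C1 + max 0 C2)"
  have K0: "K0 \<ge> 0" unfolding K0_def using eps by auto
  show ?thesis
  proof (intro exI allI impI)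
    fix v :: 'a assume v: "norm v \<le> B"
    define f where "f u = (\<zeta> (u/\<epsilon>)/\<epsilon>) *\<^sub>R ((if u \<ge> v \<bullet> e then Fm (v - u *\<^sub>R e) else 0) +
         (if u \<le> v \<bullet> e then Fp (v - u *\<^sub>R e) else 0))" for u
    have FE: "Feps \<zeta> e Fm Fp \<epsilon> v = integral {-\<epsilon>..\<epsilon>} f" unfolding Feps_def f_def[abs_def] by (rule refl)
    have pt: "norm (f u) \<le> K0" if u: "u \<in> {-\<epsilon>..\<epsilon>}" for u
    proof -
      have zc: "v - u *\<^sub>R e \<in> cball 0 (B+\<epsilon>)"
      proof -
        have "norm (v - u *\<^sub>R e) \<le> norm v + norm (u *\<^sub>R e)" by (rule norm_triangle_ineq4)
        also have "norm (u *\<^sub>R e) = \<bar>u\<bar>" using ne by simp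
        finally show ?thesis using u v by auto
      qed
      have s1: "norm (if u \<ge> v \<bullet> e then Fm (v - u *\<^sub>R e) else 0) \<le> max 0 C1"
        using C1[OF zc] by auto
      have s2: "norm (if u \<le> v \<bullet> e then Fp (v - u *\<^sub>R e) else 0) \<le> max 0 C2"
        using C2[OF zc] by auto
      have sum: "norm ((if u \<ge> v \<bullet> e then Fm (v - u *\<^sub>R e) else 0) +
         (if u \<le> v \<bullet> e then Fp (v - u *\<^sub>R e) else 0)) \<le> max 0 C1 + max 0 C2"
        by (rule order_trans[OF norm_triangle_ineq]) (use s1 s2 in linarith)
      have ue: "u/\<epsilon> \<in> {-1..1}" using u eps by (auto simp: field_simps)
      have zz: "\<bar>\<zeta> (u/\<epsilon>)/\<epsilon>\<bar> \<le> max 0 Z / \<epsilon>"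
        using Z[OF ue] z0 eps by (auto simp: divide_right_mono)
      have "norm (f u) = \<bar>\<zeta> (u/\<epsilon>)/\<epsilon>\<bar> * norm ((if u \<ge> v \<bullet> e then Fm (v - u *\<^sub>R e) else 0) +
         (if u \<le> v \<bullet> e then Fp (v - u *\<^sub>R e) else 0))" by (simp add: f_def)
      also have "\<dots> \<le> max 0 Z / \<epsilon> * (max 0 C1 + max 0 C2)"
        by (rule mult_mono[OF zz sum]) (use eps in auto)
      finally show ?thesis unfolding K0_def .
    qed
    show "norm (Feps \<zeta> e Fm Fp \<epsilon> v) \<le> K0 * (2*\<epsilon>)"
    proof (cases "f integrable_on {-\<epsilon>..\<epsilon>}")
      case True
      have "norm (integral {-\<epsilon>..\<epsilon>} f) \<le> K0 * measure lborel (cbox (-\<epsilon>) \<epsilon>)"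
        by (rule has_integral_bound[OF K0]) (use True pt in \<open>auto simp: has_integral_integral\<close>)
      then show ?thesis using FE eps by simp
    next
      case False
      then show ?thesis using FE K0 eps by (simp add: not_integrable_integral)
    qed
  qed
qed

lemma Feps_inward:
  fixes Fm Fp :: "'a::euclidean_space \<Rightarrow> 'a" and e w v :: 'a
  assumes e: "e \<in> Basis" and z0: "\<forall>x. \<zeta> x \<ge> 0" and eps: "\<epsilon> > 0" and c7: "c7 > 0"
    and A2: "\<forall>v. norm v > R2 \<longrightarrow>
         (v \<bullet> e \<le> 0 \<longrightarrow> Fm v \<bullet> (v /\<^sub>R norm v) < - c7 * norm (Fm v)) \<and>
         (v \<bullet> e \<ge> 0 \<longrightarrow> Fp v \<bullet> (v /\<^sub>R norm v) < - c7 * norm (Fp v))"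
    and R2: "R2 \<ge> 0" and w1: "norm w = 1"
    and big: "norm v \<ge> R2 + 4*\<epsilon>/c7 + 3*\<epsilon> + 1"
    and cone: "norm (norm v *\<^sub>R w - v) \<le> c7/2 * norm v"
  shows "Feps \<zeta> e Fm Fp \<epsilon> v \<bullet> w \<le> 0"
proof -
  have ne: "norm e = 1" and ee: "e \<bullet> e = 1" using e by auto
  define f where "f u = (\<zeta> (u/\<epsilon>)/\<epsilon>) *\<^sub>R ((if u \<ge> v \<bullet> e then Fm (v - u *\<^sub>R e) else 0) +
         (if u \<le> v \<bullet> e then Fp (v - u *\<^sub>R e) else 0))" for u
  have FE: "Feps \<zeta> e Fm Fp \<epsilon> v = integral {-\<epsilon>..\<epsilon>} f" unfolding Feps_def f_def[abs_def] by (rule refl)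
  have 4: "4*\<epsilon>/c7 \<ge> 0" using eps c7 by simp
  have pt: "f u \<bullet> w \<le> 0" if u: "u \<in> {-\<epsilon>..\<epsilon>}" for u
  proof -
    define z where "z = v - u *\<^sub>R e"
    have vz: "norm (v - z) \<le> \<epsilon>" using u ne by (auto simp: z_def)
    have zn: "norm z \<ge> norm v - \<epsilon>" using vz norm_triangle_ineq3[of v z] by linarith
    have zR: "norm z > R2" using zn big 4 eps by linarith
    have zpos: "norm z > 0" using zR R2 by linarith
    have ze: "z \<bullet> e = v \<bullet> e - u" using ee by (simp add: z_def inner_diff_left)
    have key: "H \<bullet> w \<le> 0" if "H \<bullet> (z /\<^sub>R norm z) < - c7 * norm H" for H
    proof (rule geo[where c=c7 and \<epsilon>=\<epsilon> and z=z and v=v])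
      have "H \<bullet> (z /\<^sub>R norm z) = (H \<bullet> z) / norm z" by (simp add: divide_inverse_commute)
      then have "(H \<bullet> z) / norm z \<le> - c7 * norm H" using that by simp
      then have "H \<bullet> z \<le> (- c7 * norm H) * norm z" using zpos by (simp add: divide_le_eq)
      then show "H \<bullet> z \<le> - c7 * norm z * norm H" by (simp add: algebra_simps)
    qed (use w1 cone vz c7 eps big R2 4 zpos in auto)
    have a: "(if u \<ge> v \<bullet> e then Fm z \<bullet> w else 0) \<le> 0"
      using key A2 zR ze by auto
    have b: "(if u \<le> v \<bullet> e then Fp z \<bullet> w else 0) \<le> 0"
      using key A2 zR ze by auto
    have "f u \<bullet> w = (\<zeta> (u/\<epsilon>)/\<epsilon>) * ((if u \<ge> v \<bullet> e then Fm z \<bullet> w else 0) +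
         (if u \<le> v \<bullet> e then Fp z \<bullet> w else 0))"
      by (simp add: f_def z_def inner_add_left)
    also have "\<dots> \<le> 0"
      by (rule mult_nonneg_nonpos) (use z0 eps a b in auto)
    finally show ?thesis .
  qed
  show ?thesis
  proof (cases "f integrable_on {-\<epsilon>..\<epsilon>}")
    case True
    have lin: "integral {-\<epsilon>..\<epsilon>} ((\<lambda>x. x \<bullet> w) \<circ> f) = integral {-\<epsilon>..\<epsilon>} f \<bullet> w"
      by (rule integral_linear[OF True bounded_linear_inner_left])
    have int: "((\<lambda>x. x \<bullet> w) \<circ> f) integrable_on {-\<epsilon>..\<epsilon>}"
      by (rule integrable_linear[OF True bounded_linear_inner_left])
    have "integral {-\<epsilon>..\<epsilon>} ((\<lambda>x. x \<bullet> w) \<circ> f) \<le> integral {-\<epsilon>..\<epsilon>} (\<lambda>x. 0::real)"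
      by (rule integral_le[OF int]) (use pt in auto)
    then show ?thesis using lin FE by simp
  next
    case False
    then show ?thesis using FE by (simp add: not_integrable_integral)
  qed
qed



lemma le_sq1: fixes x :: real shows "x \<le> x\<^sup>2 + 1"
proof -
  have "0 \<le> (x - 1)\<^sup>2" by simp
  then have "2*x \<le> x\<^sup>2 + 1" by (simp add: power2_diff)
  moreover have "0 \<le> x\<^sup>2" by simp
  ultimately show ?thesis by linarith
qed

lemma adm_integrable:
  fixes \<alpha> \<alpha>' :: "real \<Rightarrow> 'a::euclidean_space"
  assumes adm: "admissible t0 tf x0 xf \<alpha> \<alpha>'"
  shows "set_integrable lborel {t0..tf} \<alpha>'"
proof -
  define I where "I = {t0..tf}"
  define \<beta> where "\<beta> x = indicator I x *\<^sub>R \<alpha>' x" for x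
  have bm[measurable]: "\<beta> \<in> borel_measurable lborel"
    using adm unfolding admissible_def set_borel_measurable_def \<beta>_def[abs_def] I_def by blast
  have fin: "(\<integral>\<^sup>+ t. ennreal ((norm (\<alpha>' t))\<^sup>2) * indicator I t \<partial>lborel) < \<infinity>"
    using adm unfolding admissible_def I_def by blast
  have eq: "(\<integral>\<^sup>+ t. ennreal ((norm (\<beta> t))\<^sup>2) \<partial>lborel) = (\<integral>\<^sup>+ t. ennreal ((norm (\<alpha>' t))\<^sup>2) * indicator I t \<partial>lborel)"
    by (intro nn_integral_cong) (auto simp: \<beta>_def indicator_def)
  have "(\<integral>\<^sup>+ t. ennreal (norm (\<beta> t)) \<partial>lborel) \<le> (\<integral>\<^sup>+ t. ennreal ((norm (\<beta> t))\<^sup>2) + indicator I t \<partial>lborel)"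
  proof (intro nn_integral_mono)
    fix t
    show "ennreal (norm (\<beta> t)) \<le> ennreal ((norm (\<beta> t))\<^sup>2) + indicator I t"
    proof (cases "t \<in> I")
      case True
      have "norm (\<beta> t) \<le> (norm (\<beta> t))\<^sup>2 + 1"
        by (rule le_sq1)
      then have "ennreal (norm (\<beta> t)) \<le> ennreal ((norm (\<beta> t))\<^sup>2 + 1)" by (rule ennreal_leI)
      then show ?thesis using True by (simp add: ennreal_plus)
    next
      case False then show ?thesis by (simp add: \<beta>_def)
    qed
  qed
  also have "\<dots> = (\<integral>\<^sup>+ t. ennreal ((norm (\<beta> t))\<^sup>2) \<partial>lborel) + emeasure lborel I"
    by (subst nn_integral_add) (auto simp: I_def)
  also have "\<dots> < \<infinity>" using fin eq by (simp add: I_def emeasure_lborel_Icc_eq)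
  finally have fin2: "(\<integral>\<^sup>+ t. ennreal (norm (\<beta> t)) \<partial>lborel) < \<infinity>" .
  have "integrable lborel \<beta>" by (rule integrableI_bounded[OF bm fin2])
  then show ?thesis unfolding set_integrable_def \<beta>_def[abs_def] I_def .
qed

lemma adm_rep:
  fixes \<alpha> \<alpha>' :: "real \<Rightarrow> 'a::euclidean_space"
  assumes adm: "admissible t0 tf x0 xf \<alpha> \<alpha>'"
  shows "\<forall>t\<in>{t0..tf}. \<alpha> t = x0 + integral {t0..t} \<alpha>'"
    and "continuous_on {t0..tf} \<alpha>"
proof -
  have si: "set_integrable lborel {t0..tf} \<alpha>'" by (rule adm_integrable[OF adm])
  show rep: "\<forall>t\<in>{t0..tf}. \<alpha> t = x0 + integral {t0..t} \<alpha>'"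
  proof
    fix t assume t: "t \<in> {t0..tf}"
    have "set_integrable lborel {t0..t} \<alpha>'"
      by (rule set_integrable_subset[OF si]) (use t in auto)
    then have "(LINT s:{t0..t}|lborel. \<alpha>' s) = integral {t0..t} \<alpha>'"
      by (rule set_borel_integral_eq_integral(2))
    then show "\<alpha> t = x0 + integral {t0..t} \<alpha>'" using adm t unfolding admissible_def by auto
  qed
  have "\<alpha>' integrable_on {t0..tf}" by (rule set_borel_integral_eq_integral(1)[OF si])
  then have "continuous_on {t0..tf} (\<lambda>t. x0 + integral {t0..t} \<alpha>')"
    by (intro continuous_on_add continuous_on_const indefinite_integral_continuous_1)
  then show "continuous_on {t0..tf} \<alpha>"
    by (rule continuous_on_eq) (use rep in auto)
qed



lemma apriori:
  fixes \<alpha> \<alpha>' :: "real \<Rightarrow> 'a::euclidean_space" and F :: "'a \<Rightarrow> 'a"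
  assumes c7: "c7 > 0" and Rin: "Rin \<ge> 0"
    and inward: "\<And>v w. norm w = 1 \<Longrightarrow> norm v \<ge> Rin \<Longrightarrow> norm (norm v *\<^sub>R w - v) \<le> c7/2 * norm v \<Longrightarrow> F v \<bullet> w \<le> 0"
    and tt: "t0 < tf" and M1: "M1 > 0"
    and adm: "admissible t0 tf x0 xf \<alpha> \<alpha>'"
    and rt: "(\<integral>\<^sup>+ t\<in>{t0..tf}. ennreal ((norm (\<alpha>' t - F (\<alpha> t)))\<^sup>2) \<partial>lborel) < ennreal M1"
  shows "\<forall>t\<in>{t0..tf}. norm (\<alpha> t) < 2 * (norm x0 + Rin + (M1 + (tf - t0)) / min (c7\<^sup>2/8) (1/2) + 1)"
proof (rule ccontr)
  define I where "I = {t0..tf}"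
  define \<delta> where "\<delta> = min (c7\<^sup>2/8) (1/2::real)"
  define D where "D = M1 + (tf - t0)"
  define B where "B = 2 * (norm x0 + Rin + D / \<delta> + 1)"
  have \<delta>: "0 < \<delta>" "\<delta> \<le> 1/2" "\<delta> \<le> c7\<^sup>2/8" using c7 by (auto simp: \<delta>_def)
  have D: "D > 0" using M1 tt by (simp add: D_def)
  have Dd: "D / \<delta> > 0" using D \<delta> by simp
  have B1: "\<delta> * B > D"
  proof -
    have "\<delta> * B = 2*\<delta>*(norm x0 + Rin + 1) + 2*D" using \<delta> by (simp add: B_def field_simps)
    moreover have "2*\<delta>*(norm x0 + Rin + 1) > 0" using \<delta> Rin by (simp add: add_nonneg_pos)
    ultimately show ?thesis using D by linarith
  qed
  have Bpos: "B > 0" using Dd Rin by (simp add: B_def add_nonneg_pos)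
  have B2: "(1-\<delta>) * B \<ge> B/2"
  proof -
    have "\<delta> * B \<le> (1/2) * B" using \<delta> Bpos by (intro mult_right_mono) auto
    then show ?thesis by (simp add: algebra_simps)
  qed
  have B3: "B/2 > norm x0" "B/2 \<ge> Rin" using Dd Rin by (auto simp: B_def)
  assume "\<not> (\<forall>t\<in>{t0..tf}. norm (\<alpha> t) < 2 * (norm x0 + Rin + (M1 + (tf - t0)) / min (c7\<^sup>2/8) (1/2) + 1))"
  then obtain t1 where t1: "t1 \<in> I" "norm (\<alpha> t1) \<ge> B"
    unfolding I_def B_def D_def \<delta>_def by force
  have rep: "\<forall>t\<in>I. \<alpha> t = x0 + integral {t0..t} \<alpha>'" and cont: "continuous_on I \<alpha>"
    using adm_rep[OF adm] by (auto simp: I_def)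
  have repL: "\<forall>t\<in>I. \<alpha> t = x0 + (LINT s:{t0..t}|lborel. \<alpha>' s)"
    using adm unfolding admissible_def I_def by blast
  have si: "set_integrable lborel I \<alpha>'" using adm_integrable[OF adm] by (simp add: I_def)
  have at0: "\<alpha> t0 = x0" using rep tt by (simp add: I_def)
  define S where "S = I \<inter> (\<lambda>t. norm (\<alpha> t)) -` {B..}"
  have Scl: "closed S" unfolding S_def
    by (intro continuous_closed_preimage continuous_on_norm cont) (auto simp: I_def)
  have Sne: "t1 \<in> S" using t1 by (auto simp: S_def)
  have Sbdd: "bdd_below S" unfolding S_def I_def by (rule bdd_belowI[of _ t0]) auto
  define T where "T = Inf S"
  have TS: "T \<in> S" using closed_contains_Inf[of S] Scl Sne Sbdd by (auto simp: T_def)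
  have TI: "T \<in> I" "norm (\<alpha> T) \<ge> B" using TS by (auto simp: S_def)
  have before: "norm (\<alpha> r) < B" if r: "r \<in> I" "r < T" for r
  proof (rule ccontr)
    assume "\<not> norm (\<alpha> r) < B"
    then have "r \<in> S" using r by (auto simp: S_def)
    then have "T \<le> r" unfolding T_def using Sbdd by (rule cInf_lower)
    then show False using r by simp
  qed
  define B' where "B' = norm (\<alpha> T)"
  have B': "B' \<ge> B" "B' > 0" using TI Bpos by (auto simp: B'_def)
  define w where "w = \<alpha> T /\<^sub>R B'"
  have w1: "norm w = 1" using B' by (simp add: w_def B'_def)
  have wT: "w \<bullet> \<alpha> T = B'"
  proof -
    have "w \<bullet> \<alpha> T = (\<alpha> T \<bullet> \<alpha> T) / B'" by (simp add: w_def divide_inverse_commute)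
    also have "\<alpha> T \<bullet> \<alpha> T = B'^2" by (simp add: B'_def power2_norm_eq_inner)
    finally show ?thesis using B' by (simp add: power2_eq_square)
  qed
  have CS: "w \<bullet> x \<le> norm x" for x using norm_cauchy_schwarz[of w x] w1 by simp
  define P where "P = {t0..T} \<inter> (\<lambda>r. w \<bullet> \<alpha> r) -` {..(1-\<delta>)*B'}"
  have contT: "continuous_on {t0..T} \<alpha>"
    by (rule continuous_on_subset[OF cont]) (use TI in \<open>auto simp: I_def\<close>)
  have Pcl: "closed P" unfolding P_def
    by (intro continuous_closed_preimage continuous_on_inner continuous_on_const contT) auto
  have t0P: "t0 \<in> P"
  proof -
    have "w \<bullet> \<alpha> t0 \<le> norm x0" using CS at0 by simp
    also have "\<dots> \<le> (1-\<delta>)*B'"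
      using B3 B2 B' \<delta> mult_left_mono[of B B' "1-\<delta>"] by linarith
    finally show ?thesis using TI by (auto simp: P_def I_def)
  qed
  have Pbdd: "bdd_above P" unfolding P_def by (rule bdd_aboveI[of _ T]) auto
  define s where "s = Sup P"
  have sP: "s \<in> P" using closed_contains_Sup[of P] Pcl t0P Pbdd by (auto simp: s_def)
  have s: "t0 \<le> s" "s \<le> T" "w \<bullet> \<alpha> s \<le> (1-\<delta>)*B'" using sP by (auto simp: P_def)
  have after: "w \<bullet> \<alpha> r > (1-\<delta>)*B'" if r: "r \<in> {s<..T}" for r
  proof (rule ccontr)
    assume "\<not> w \<bullet> \<alpha> r > (1-\<delta>)*B'"
    then have "r \<in> P" using r s by (auto simp: P_def)
    then have "r \<le> s" unfolding s_def using Pbdd by (rule cSup_upper)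
    then show False using r by simp
  qed
  define A where "A = {s<..T}"
  have AI: "A \<subseteq> I" using s TI by (auto simp: A_def I_def)
  have key: "w \<bullet> \<alpha>' r \<le> norm (\<alpha>' r - F (\<alpha> r))" if r: "r \<in> A" for r
  proof -
    define n where "n = norm (\<alpha> r)"
    have rI: "r \<in> I" using r AI by auto
    have nB: "n \<le> B'"
    proof (cases "r < T")
      case True then show ?thesis using before[OF rI] B' by (simp add: n_def)
    next
      case False then have "r = T" using r by (auto simp: A_def)
      then show ?thesis by (simp add: n_def B'_def)
    qed
    have wa: "w \<bullet> \<alpha> r > (1-\<delta>)*B'" using after r by (auto simp: A_def)
    have nw: "w \<bullet> \<alpha> r \<le> n" using CS by (simp add: n_def)
    have "(1-\<delta>)*B' \<ge> (1-\<delta>)*B" using B' \<delta> by (intro mult_left_mono) auto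
    then have nR: "n \<ge> Rin" using wa nw B2 B3 by linarith
    have n0: "n \<ge> 0" by (simp add: n_def)
    have sq: "(norm (n *\<^sub>R w - \<alpha> r))\<^sup>2 = 2*n^2 - 2*n*(w \<bullet> \<alpha> r)"
    proof -
      have ww: "w \<bullet> w = 1" using w1 by (simp add: power2_norm_eq_inner[symmetric])
      have aa: "\<alpha> r \<bullet> \<alpha> r = n^2" by (simp add: n_def power2_norm_eq_inner)
      show ?thesis unfolding power2_norm_eq_inner
        by (simp add: inner_diff_left inner_diff_right inner_commute ww aa algebra_simps power2_eq_square)
    qed
    also have "\<dots> \<le> 2*n^2 - 2*n*((1-\<delta>)*B')"
      using wa n0 by (simp add: mult_left_mono)
    also have "\<dots> \<le> 2*n^2 - 2*n*((1-\<delta>)*n)"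
      using nB n0 \<delta> by (simp add: mult_left_mono)
    also have "\<dots> = 2*\<delta>*n^2" by (simp add: algebra_simps power2_eq_square)
    also have "\<dots> \<le> (c7/2 * n)^2"
    proof -
      have h: "(8*\<delta>)*n^2 \<le> c7^2 * n^2" using \<delta> by (intro mult_right_mono) auto
      have eq: "(c7/2*n)^2 = c7^2*n^2/4" by (simp add: power_mult_distrib power_divide)
      show ?thesis unfolding eq using h by (simp add: algebra_simps)
    qed
    finally have "norm (n *\<^sub>R w - \<alpha> r) \<le> c7/2 * n"
      by (rule power2_le_imp_le) (use c7 n0 in simp)
    then have Fw: "F (\<alpha> r) \<bullet> w \<le> 0" using inward[OF w1] nR by (simp add: n_def)
    have "w \<bullet> \<alpha>' r = w \<bullet> (\<alpha>' r - F (\<alpha> r)) + F (\<alpha> r) \<bullet> w"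
      by (simp add: inner_diff_right inner_commute)
    also have "\<dots> \<le> norm (\<alpha>' r - F (\<alpha> r))" using CS Fw by (smt (verit))
    finally show ?thesis .
  qed
  have Ameas: "A \<in> sets lborel" by (simp add: A_def)
  have siA: "set_integrable lborel A \<alpha>'"
    by (rule set_integrable_subset[OF si Ameas AI])
  have sis: "set_integrable lborel {t0..s} \<alpha>'"
    by (rule set_integrable_subset[OF si]) (use s TI in \<open>auto simp: I_def\<close>)
  have un: "{t0..T} = {t0..s} \<union> A" using s by (auto simp: A_def)
  have split: "(LINT r:{t0..T}|lborel. \<alpha>' r) = (LINT r:{t0..s}|lborel. \<alpha>' r) + (LINT r:A|lborel. \<alpha>' r)"
    unfolding un by (rule set_integral_Un[OF _ sis siA]) (auto simp: A_def)
  have sI: "s \<in> I" using s TI by (auto simp: I_def)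
  have diff: "\<alpha> T - \<alpha> s = (LINT r:A|lborel. \<alpha>' r)"
    using repL TI sI split by simp
  have iA: "integrable lborel (\<lambda>x. indicator A x *\<^sub>R \<alpha>' x)" using siA by (simp add: set_integrable_def)
  have iw: "integrable lborel (\<lambda>x. w \<bullet> (indicator A x *\<^sub>R \<alpha>' x))" by (rule integrable_inner_right) (rule iA)
  have siw: "set_integrable lborel A (\<lambda>r. w \<bullet> \<alpha>' r)"
    unfolding set_integrable_def using iw by simp
  have inner: "w \<bullet> (LINT r:A|lborel. \<alpha>' r) = (LINT r:A|lborel. w \<bullet> \<alpha>' r)"
  proof -
    have "(LINT r:A|lborel. w \<bullet> \<alpha>' r) = (\<integral>x. w \<bullet> (indicator A x *\<^sub>R \<alpha>' x) \<partial>lborel)"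
      by (simp add: set_lebesgue_integral_def)
    also have "\<dots> = w \<bullet> (\<integral>x. indicator A x *\<^sub>R \<alpha>' x \<partial>lborel)"
      by (rule integral_inner_right) (use iA in auto)
    finally show ?thesis by (simp add: set_lebesgue_integral_def)
  qed
  define \<phi> where "\<phi> r = max 0 (w \<bullet> \<alpha>' r)" for r
  have m0: "(\<lambda>x. indicator A x *\<^sub>R (w \<bullet> \<alpha>' x)) \<in> borel_measurable lborel"
    using siw by (simp add: set_integrable_def borel_measurable_integrable)
  have m1: "(\<lambda>x. max 0 (indicator A x *\<^sub>R (w \<bullet> \<alpha>' x))) \<in> borel_measurable lborel"
    by (intro borel_measurable_max borel_measurable_const m0)
  have eqf: "(\<lambda>x. indicator A x *\<^sub>R \<phi> x) = (\<lambda>x. max 0 (indicator A x *\<^sub>R (w \<bullet> \<alpha>' x)))"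
    by (auto simp: fun_eq_iff indicator_def \<phi>_def)
  have m\<phi>[measurable]: "(\<lambda>x. indicator A x *\<^sub>R \<phi> x) \<in> borel_measurable lborel"
    using m1 eqf by simp
  have si\<phi>: "set_integrable lborel A \<phi>"
    by (rule set_integrable_bound[OF siw]) (use m\<phi> in \<open>auto simp: set_borel_measurable_def \<phi>_def\<close>)
  have mono1: "(LINT r:A|lborel. w \<bullet> \<alpha>' r) \<le> (LINT r:A|lborel. \<phi> r)"
    by (rule set_integral_mono[OF siw si\<phi>]) (auto simp: \<phi>_def)
  have nnr: "(LINT r:A|lborel. \<phi> r) = enn2real (\<integral>\<^sup>+ x. ennreal (indicator A x *\<^sub>R \<phi> x) \<partial>lborel)"
    unfolding set_lebesgue_integral_def
    by (rule integral_eq_nn_integral[OF m\<phi>]) (auto simp: \<phi>_def)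
  have m2[measurable]: "(\<lambda>x. ennreal ((indicator A x *\<^sub>R \<phi> x)\<^sup>2)) \<in> borel_measurable lborel"
    by measurable
  have mI[measurable]: "(\<lambda>x. ennreal (indicator I x)) \<in> borel_measurable lborel"
    by (simp add: I_def)
  have "(\<integral>\<^sup>+ x. ennreal (indicator A x *\<^sub>R \<phi> x) \<partial>lborel)
      \<le> (\<integral>\<^sup>+ x. ennreal ((indicator A x *\<^sub>R \<phi> x)\<^sup>2) + ennreal (indicator I x) \<partial>lborel)"
  proof (intro nn_integral_mono)
    fix x
    show "ennreal (indicator A x *\<^sub>R \<phi> x) \<le> ennreal ((indicator A x *\<^sub>R \<phi> x)\<^sup>2) + ennreal (indicator I x)"
    proof (cases "x \<in> A")
      case True
      then have "x \<in> I" using AI by auto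
      have "\<phi> x \<le> (\<phi> x)\<^sup>2 + 1" by (rule le_sq1)
      then have "ennreal (\<phi> x) \<le> ennreal ((\<phi> x)\<^sup>2 + 1)" by (rule ennreal_leI)
      then show ?thesis using True \<open>x \<in> I\<close> by (simp add: ennreal_plus)
    next
      case False then show ?thesis by simp
    qed
  qed
  also have "\<dots> = (\<integral>\<^sup>+ x. ennreal ((indicator A x *\<^sub>R \<phi> x)\<^sup>2) \<partial>lborel) + (\<integral>\<^sup>+ x. ennreal (indicator I x) \<partial>lborel)"
    by (rule nn_integral_add[OF m2 mI])
  also have "(\<integral>\<^sup>+ x. ennreal (indicator I x) \<partial>lborel) = ennreal (tf - t0)"
    using tt by (simp add: I_def ennreal_indicator nn_integral_indicator emeasure_lborel_Icc_eq)
  also have "(\<integral>\<^sup>+ x. ennreal ((indicator A x *\<^sub>R \<phi> x)\<^sup>2) \<partial>lborel)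
      \<le> (\<integral>\<^sup>+ t\<in>{t0..tf}. ennreal ((norm (\<alpha>' t - F (\<alpha> t)))\<^sup>2) \<partial>lborel)"
  proof (intro nn_integral_mono)
    fix x
    show "ennreal ((indicator A x *\<^sub>R \<phi> x)\<^sup>2) \<le> ennreal ((norm (\<alpha>' x - F (\<alpha> x)))\<^sup>2) * indicator {t0..tf} x"
    proof (cases "x \<in> A")
      case True
      then have xI: "x \<in> {t0..tf}" using AI by (auto simp: I_def)
      have "\<phi> x \<le> norm (\<alpha>' x - F (\<alpha> x))" using key[OF True] by (simp add: \<phi>_def)
      moreover have "0 \<le> \<phi> x" by (simp add: \<phi>_def)
      ultimately have "(\<phi> x)\<^sup>2 \<le> (norm (\<alpha>' x - F (\<alpha> x)))\<^sup>2" by (rule power_mono)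
      then show ?thesis using True xI by (simp add: ennreal_leI)
    next
      case False then show ?thesis by simp
    qed
  qed
  finally have nnb: "(\<integral>\<^sup>+ x. ennreal (indicator A x *\<^sub>R \<phi> x) \<partial>lborel) \<le> ennreal M1 + ennreal (tf - t0)"
    using rt by (meson add_right_mono less_imp_le order_trans)
  then have nnb2: "(\<integral>\<^sup>+ x. ennreal (indicator A x *\<^sub>R \<phi> x) \<partial>lborel) \<le> ennreal D"
    using M1 tt by (simp add: D_def ennreal_plus)
  have "(LINT r:A|lborel. \<phi> r) \<le> D"
    unfolding nnr using enn2real_mono[OF nnb2] D by simp
  then have "w \<bullet> (\<alpha> T - \<alpha> s) \<le> D" using diff inner mono1 by simp
  then have "B' - w \<bullet> \<alpha> s \<le> D" using wT by (simp add: inner_diff_right)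
  then have "\<delta> * B' \<le> D" using s(3) by (simp add: algebra_simps)
  moreover have "\<delta> * B \<le> \<delta> * B'" using B' \<delta> by (intro mult_left_mono) auto
  ultimately show False using B1 by linarith
qed



lemma h1bound:
  fixes \<alpha> \<alpha>' :: "real \<Rightarrow> 'a::euclidean_space" and F :: "'a \<Rightarrow> 'a"
  assumes adm: "admissible t0 tf x0 xf \<alpha> \<alpha>'" and tt: "t0 < tf"
    and rt: "(\<integral>\<^sup>+ t\<in>{t0..tf}. ennreal ((norm (\<alpha>' t - F (\<alpha> t)))\<^sup>2) \<partial>lborel) < ennreal M1"
    and ab: "\<forall>t\<in>{t0..tf}. norm (\<alpha> t) \<le> Bb" and Fb: "\<forall>t\<in>{t0..tf}. norm (F (\<alpha> t)) \<le> K"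
    and K: "K \<ge> 0" and Bb: "Bb \<ge> 0" and M1: "M1 > 0"
  shows "H1_norm_sq t0 tf \<alpha> \<alpha>' \<le> ennreal (2*M1 + (Bb\<^sup>2 + 2*K\<^sup>2)*(tf-t0))"
proof -
  define I where "I = {t0..tf}"
  define C where "C = Bb\<^sup>2 + 2*K\<^sup>2"
  have C0: "C \<ge> 0" by (simp add: C_def)
  have cont: "continuous_on I \<alpha>" using adm_rep(2)[OF adm] by (simp add: I_def)
  have ma: "(\<lambda>x. indicator I x *\<^sub>R \<alpha> x) \<in> borel_measurable borel"
    by (rule borel_measurable_continuous_on_indicator[OF _ cont]) (simp add: I_def)
  have mb: "(\<lambda>x. indicator I x *\<^sub>R \<alpha>' x) \<in> borel_measurable lborel"
    using adm unfolding admissible_def set_borel_measurable_def I_def by blast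
  define \<psi> where "\<psi> t = (norm (indicator I t *\<^sub>R \<alpha> t))\<^sup>2 + (norm (indicator I t *\<^sub>R \<alpha>' t))\<^sup>2" for t
  have m\<psi>[measurable]: "\<psi> \<in> borel_measurable lborel"
    unfolding \<psi>_def[abs_def] using ma mb by measurable
  define q where "q t = max 0 (\<psi> t - C * indicator I t) / 2" for t
  have mq[measurable]: "(\<lambda>t. ennreal (q t)) \<in> borel_measurable lborel"
    unfolding q_def[abs_def] by measurable (auto simp: I_def)
  have mC[measurable]: "(\<lambda>t. ennreal (C * indicator I t)) \<in> borel_measurable lborel"
    by measurable (auto simp: I_def)
  have "H1_norm_sq t0 tf \<alpha> \<alpha>' = (\<integral>\<^sup>+ t. ennreal (\<psi> t) \<partial>lborel)"
    unfolding H1_norm_sq_def by (intro nn_integral_cong) (auto simp: \<psi>_def I_def indicator_def)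
  also have "\<dots> \<le> (\<integral>\<^sup>+ t. ennreal (2 * q t) + ennreal (C * indicator I t) \<partial>lborel)"
  proof (intro nn_integral_mono)
    fix t
    have "\<psi> t \<le> 2 * q t + C * indicator I t"
      by (cases "t \<in> I") (auto simp: q_def \<psi>_def)
    then have "ennreal (\<psi> t) \<le> ennreal (2 * q t + C * indicator I t)" by (rule ennreal_leI)
    also have "\<dots> = ennreal (2 * q t) + ennreal (C * indicator I t)"
      by (rule ennreal_plus) (use C0 in \<open>auto simp: q_def\<close>)
    finally show "ennreal (\<psi> t) \<le> ennreal (2 * q t) + ennreal (C * indicator I t)" .
  qed
  also have "\<dots> = (\<integral>\<^sup>+ t. 2 * ennreal (q t) \<partial>lborel) + (\<integral>\<^sup>+ t. ennreal C * indicator I t \<partial>lborel)"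
  proof -
    have e1: "\<And>t. ennreal (2 * q t) = 2 * ennreal (q t)"
      by (subst ennreal_mult) (auto simp: q_def)
    have e2: "\<And>t. ennreal (C * indicator I t) = ennreal C * indicator I t"
      using C0 by (auto simp: indicator_def)
    have m1: "(\<lambda>t. 2 * ennreal (q t)) \<in> borel_measurable lborel" by measurable
    have m2: "(\<lambda>t. ennreal C * indicator I t) \<in> borel_measurable lborel" by measurable (auto simp: I_def)
    have "(\<integral>\<^sup>+ t. ennreal (2 * q t) + ennreal (C * indicator I t) \<partial>lborel)
        = (\<integral>\<^sup>+ t. 2 * ennreal (q t) + ennreal C * indicator I t \<partial>lborel)"
      by (simp only: e1 e2)
    also have "\<dots> = (\<integral>\<^sup>+ t. 2 * ennreal (q t) \<partial>lborel) + (\<integral>\<^sup>+ t. ennreal C * indicator I t \<partial>lborel)"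
      by (rule nn_integral_add[OF m1 m2])
    finally show ?thesis .
  qed
  also have "(\<integral>\<^sup>+ t. 2 * ennreal (q t) \<partial>lborel) = 2 * (\<integral>\<^sup>+ t. ennreal (q t) \<partial>lborel)"
    by (rule nn_integral_cmult[OF mq])
  also have "(\<integral>\<^sup>+ t. ennreal C * indicator I t \<partial>lborel) = ennreal C * ennreal (tf - t0)"
    using tt by (simp add: nn_integral_cmult_indicator I_def emeasure_lborel_Icc_eq)
  also have "(\<integral>\<^sup>+ t. ennreal (q t) \<partial>lborel) \<le> ennreal M1"
  proof -
    have "(\<integral>\<^sup>+ t. ennreal (q t) \<partial>lborel) \<le> (\<integral>\<^sup>+ t\<in>{t0..tf}. ennreal ((norm (\<alpha>' t - F (\<alpha> t)))\<^sup>2) \<partial>lborel)"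
    proof (intro nn_integral_mono)
      fix t
      show "ennreal (q t) \<le> ennreal ((norm (\<alpha>' t - F (\<alpha> t)))\<^sup>2) * indicator {t0..tf} t"
      proof (cases "t \<in> I")
        case True
        define N where "N = norm (\<alpha>' t - F (\<alpha> t))"
        have tI: "t \<in> {t0..tf}" using True by (simp add: I_def)
        have a1: "norm (\<alpha> t) \<le> Bb" using ab tI by auto
        have a1': "(norm (\<alpha> t))\<^sup>2 \<le> Bb\<^sup>2" using a1 by (simp add: power_mono)
        have f1: "norm (F (\<alpha> t)) \<le> K" using Fb tI by auto
        have n1: "norm (\<alpha>' t) \<le> N + K"
          using norm_triangle_ineq[of "\<alpha>' t - F (\<alpha> t)" "F (\<alpha> t)"] f1 by (simp add: N_def)
        have n2: "(norm (\<alpha>' t))\<^sup>2 \<le> (N + K)\<^sup>2" using n1 by (simp add: power_mono)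
        have n3: "(N + K)\<^sup>2 \<le> 2*N\<^sup>2 + 2*K\<^sup>2"
        proof -
          have "0 \<le> (N - K)\<^sup>2" by simp
          then show ?thesis by (simp add: power2_sum power2_diff)
        qed
        have "q t \<le> N\<^sup>2"
          using True a1' n2 n3 by (simp add: q_def \<psi>_def C_def)
        then show ?thesis using tI by (simp add: N_def ennreal_leI)
      next
        case False then show ?thesis by (simp add: q_def \<psi>_def I_def)
      qed
    qed
    then show ?thesis using rt by simp
  qed
  finally have "H1_norm_sq t0 tf \<alpha> \<alpha>' \<le> 2 * ennreal M1 + ennreal C * ennreal (tf - t0)"
    by (meson add_right_mono mult_left_mono order_trans zero_le)
  also have "\<dots> = ennreal (2*M1 + C*(tf-t0))"
    using M1 tt C0 by (simp add: ennreal_plus ennreal_mult)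
  finally show ?thesis by (simp add: C_def)
qed



theorem mainTheorem3:
  fixes Fm Fp :: "'a::euclidean_space \<Rightarrow> 'a" and e :: 'a
    and \<zeta> :: "real \<Rightarrow> real" and t0 tf :: real and x0 xf :: 'a
  assumes "e \<in> Basis"
    and "smooth Fm" and "smooth Fp"
    and "assumption_A1 e Fm Fp" and "assumption_A2 e Fm Fp"
    and "mollifier \<zeta>"
    and "t0 < tf"
  shows "\<exists>\<epsilon>s>0. \<forall>\<epsilon>. 0 < \<epsilon> \<and> \<epsilon> < \<epsilon>s \<longrightarrow>
           (\<forall>(\<alpha> :: nat \<Rightarrow> real \<Rightarrow> 'a) \<alpha>' M1. M1 > 0 \<and>
              (\<forall>m. admissible t0 tf x0 xf (\<alpha> m) (\<alpha>' m)) \<and>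
              (\<forall>m. rate \<zeta> e Fm Fp \<epsilon> t0 tf (\<alpha> m) (\<alpha>' m) < ennreal M1) \<longrightarrow>
              (\<exists>M2>0. \<forall>m. H1_norm_sq t0 tf (\<alpha> m) (\<alpha>' m) < ennreal (M2\<^sup>2)))"
proof -
  obtain R2 c7 where R2: "R2 > 0" and c7: "c7 > 0" and A2': "\<forall>v. norm v > R2 \<longrightarrow>
         Fm v \<noteq> 0 \<and> Fp v \<noteq> 0 \<and>
         (v \<bullet> e \<le> 0 \<longrightarrow> Fm v \<bullet> (v /\<^sub>R norm v) < - c7 * norm (Fm v)) \<and>
         (v \<bullet> e \<ge> 0 \<longrightarrow> Fp v \<bullet> (v /\<^sub>R norm v) < - c7 * norm (Fp v))"
    using assms(5) unfolding assumption_A2_def by blast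
  have A2: "\<forall>v. norm v > R2 \<longrightarrow>
         (v \<bullet> e \<le> 0 \<longrightarrow> Fm v \<bullet> (v /\<^sub>R norm v) < - c7 * norm (Fm v)) \<and>
         (v \<bullet> e \<ge> 0 \<longrightarrow> Fp v \<bullet> (v /\<^sub>R norm v) < - c7 * norm (Fp v))"
    using A2' by blast
  have z0: "\<forall>x. \<zeta> x \<ge> 0" and sz: "smooth \<zeta>" using assms(6) unfolding mollifier_def by auto
  have cz: "continuous_on UNIV \<zeta>" using sz unfolding smooth_def by (metis Ck.simps(1))
  have cm: "continuous_on UNIV Fm" using assms(2) unfolding smooth_def by (metis Ck.simps(1))
  have cp: "continuous_on UNIV Fp" using assms(3) unfolding smooth_def by (metis Ck.simps(1))
  show ?thesis
  proof (rule exI[of _ "1::real"], intro conjI allI impI)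
    show "(0::real) < 1" by simp
    fix \<epsilon> :: real assume \<epsilon>: "0 < \<epsilon> \<and> \<epsilon> < 1"
    fix \<alpha> :: "nat \<Rightarrow> real \<Rightarrow> 'a" and \<alpha>' :: "nat \<Rightarrow> real \<Rightarrow> 'a" and M1 :: real
    assume H: "M1 > 0 \<and> (\<forall>m. admissible t0 tf x0 xf (\<alpha> m) (\<alpha>' m)) \<and>
              (\<forall>m. rate \<zeta> e Fm Fp \<epsilon> t0 tf (\<alpha> m) (\<alpha>' m) < ennreal M1)"
    have eps: "\<epsilon> > 0" using \<epsilon> by simp
    have M1: "M1 > 0" using H by simp
    define Rin where "Rin = R2 + 4*\<epsilon>/c7 + 3*\<epsilon> + 1"
    have Rin0: "Rin \<ge> 0" using R2 c7 eps by (simp add: Rin_def)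
    have inward: "Feps \<zeta> e Fm Fp \<epsilon> v \<bullet> w \<le> 0"
      if "norm w = 1" "norm v \<ge> Rin" "norm (norm v *\<^sub>R w - v) \<le> c7/2 * norm v" for v w
      using Feps_inward[OF assms(1) z0 eps c7 A2 _ that(1)] that(2,3) R2 by (simp add: Rin_def)
    define Bb where "Bb = 2 * (norm x0 + Rin + (M1 + (tf - t0)) / min (c7\<^sup>2/8) (1/2) + 1)"
    have bnd: "\<forall>t\<in>{t0..tf}. norm (\<alpha> m t) < Bb" for m
      unfolding Bb_def
      by (rule apriori[OF c7 Rin0 inward assms(7) M1]) (use H in \<open>auto simp: rate_def\<close>)
    have Bb0: "Bb \<ge> 0" using bnd[of 0] assms(7) by (metis atLeastAtMost_iff less_eq_real_def norm_ge_zero order_trans)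
    obtain K where K: "\<forall>v. norm v \<le> Bb \<longrightarrow> norm (Feps \<zeta> e Fm Fp \<epsilon> v) \<le> K"
      using Feps_bounded[OF assms(1) cm cp cz z0 eps] by blast
    define K' where "K' = max 0 K"
    define V where "V = 2*M1 + (Bb\<^sup>2 + 2*K'\<^sup>2)*(tf-t0)"
    have V0: "V \<ge> 0" using M1 assms(7) by (simp add: V_def)
    have hb: "H1_norm_sq t0 tf (\<alpha> m) (\<alpha>' m) \<le> ennreal V" for m
      unfolding V_def
    proof (rule h1bound[where F = "Feps \<zeta> e Fm Fp \<epsilon>"])
      show "admissible t0 tf x0 xf (\<alpha> m) (\<alpha>' m)" using H by blast
      show "(\<integral>\<^sup>+ t\<in>{t0..tf}. ennreal ((norm (\<alpha>' m t - Feps \<zeta> e Fm Fp \<epsilon> (\<alpha> m t)))\<^sup>2) \<partial>lborel) < ennreal M1"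
        using H by (auto simp: rate_def)
      show "\<forall>t\<in>{t0..tf}. norm (\<alpha> m t) \<le> Bb" using bnd[of m] by auto
      show "\<forall>t\<in>{t0..tf}. norm (Feps \<zeta> e Fm Fp \<epsilon> (\<alpha> m t)) \<le> K'"
      proof
        fix t assume t: "t \<in> {t0..tf}"
        have "norm (\<alpha> m t) \<le> Bb" using bnd[of m] t by (simp add: less_imp_le)
        then have "norm (Feps \<zeta> e Fm Fp \<epsilon> (\<alpha> m t)) \<le> K" using K by blast
        then show "norm (Feps \<zeta> e Fm Fp \<epsilon> (\<alpha> m t)) \<le> K'" unfolding K'_def by linarith
      qed
    qed (use assms(7) Bb0 M1 in \<open>auto simp: K'_def\<close>)
    define M2 where "M2 = sqrt V + 1"
    have M2: "M2 > 0" using V0 by (simp add: M2_def add_nonneg_pos)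
    have VM: "V < M2\<^sup>2"
    proof -
      have "M2\<^sup>2 = V + 2 * sqrt V + 1" using V0 by (simp add: M2_def power2_sum)
      moreover have "sqrt V \<ge> 0" using V0 by simp
      ultimately show ?thesis by linarith
    qed
    show "\<exists>M2>0. \<forall>m. H1_norm_sq t0 tf (\<alpha> m) (\<alpha>' m) < ennreal (M2\<^sup>2)"
    proof (intro exI[of _ M2] conjI allI)
      show "M2 > 0" by (fact M2)
      fix m
      have "ennreal V < ennreal (M2\<^sup>2)" using VM V0 by (simp add: ennreal_less_iff)
      then show "H1_norm_sq t0 tf (\<alpha> m) (\<alpha>' m) < ennreal (M2\<^sup>2)" using hb[of m] by (rule le_less_trans[rotated])
    qed
  qed
qed


end
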